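(* For all integers $1\le m\le n$, \[ S(n,m) = 1 + \sum_{x=m}^{\lfloor n/2\rfloor}\bigl(S(n-x,x)+1\bigr), \] where the sum is empty (and $S(n,m)=1$) when $m>\lfloor n/2\rfloor$.
   Context: An ascending composition of a positive integer $n$ is a finite sequence of positive integers $(a_1,\dots,a_k)$, $k\ge1$, with $a_1+\dots+a_k=n$ and $a_1\le\dots\le a_k$. For $1\le m\le n$, $\mathcal{A}(n,m)$ is the set of ascending compositions of $n$ with $a_1\ge m$. List the elements of $\mathcal{A}(n,m)$ in increasing lexicographic order as $b^{(1)},\dots,b^{(N)}$. The suffix length $S(n,m)$ is defined as the number of parts of $b^{(1)}$ plus, for each $i=1,\dots,N-1$, the number of parts of $b^{(i+1)}$ lying beyond the longest common prefix of $b^{(i)}$ and $b^{(i+1)}$. *)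

theory Defs
  imports Main "HOL-Library.List_Lexorder"
begin

definition asc_comps :: "nat \<Rightarrow> nat \<Rightarrow> nat list set" where
  "asc_comps n m = {xs. xs \<noteq> [] \<and> sorted xs \<and> (\<forall>x\<in>set xs. x \<ge> 1)
                        \<and> sum_list xs = n \<and> hd xs \<ge> m}"

fun lcp :: "'a list \<Rightarrow> 'a list \<Rightarrow> 'a list" where
  "lcp (x # xs) (y # ys) = (if x = y then x # lcp xs ys else [])"
| "lcp _ _ = []"

text \<open>Elements of A(n,m) listed in increasing lexicographic order
  (the linorder on lists from List_Lexorder is the lexicographic order).\<close>
definition asc_list :: "nat \<Rightarrow> nat \<Rightarrow> nat list list" where
  "asc_list n m = sorted_list_of_set (asc_comps n m)"

definition suffix_len :: "nat \<Rightarrow> nat \<Rightarrow> nat" where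
  "suffix_len n m = (let bs = asc_list n m in
     length (hd bs) +
     (\<Sum>i<length bs - 1. length (bs ! (i+1)) - length (lcp (bs ! i) (bs ! (i+1)))))"

end

theory Submission
  imports Defs
begin

fun gg :: "nat list list \<Rightarrow> nat" where
  "gg (a # b # bs) = (length b - length (lcp a b)) + gg (b # bs)"
| "gg _ = 0"

definition TT :: "nat list list \<Rightarrow> nat" where
  "TT bs = length (hd bs) + gg bs"

lemma gg_sum: "(\<Sum>i<length bs - 1. length (bs ! (i+1)) - length (lcp (bs ! i) (bs ! (i+1)))) = gg bs"
proof (induction bs rule: gg.induct)
  case (1 a b bs)
  have "length (a # b # bs) - 1 = Suc (length (b # bs) - 1)" by simp
  then show ?case using 1 by (simp only: sum.lessThan_Suc_shift) simp
qed auto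

lemma suffix_len_TT: "suffix_len n m = TT (asc_list n m)"
  unfolding suffix_len_def TT_def Let_def gg_sum ..

lemma lcp_diff: "a \<noteq> [] \<Longrightarrow> b \<noteq> [] \<Longrightarrow> hd a \<noteq> hd b \<Longrightarrow> lcp a b = []"
  by (cases a; cases b) auto

lemma gg_app: "xs \<noteq> [] \<Longrightarrow> ys \<noteq> [] \<Longrightarrow> lcp (last xs) (hd ys) = []
   \<Longrightarrow> gg (xs @ ys) = gg xs + length (hd ys) + gg ys"
proof (induction xs)
  case (Cons a xs)
  show ?case
  proof (cases xs)
    case Nil
    then show ?thesis using Cons.prems by (cases ys) auto
  next
    case (Cons b zs)
    then have "gg (xs @ ys) = gg xs + length (hd ys) + gg ys"
      using Cons.IH \<open>ys \<noteq> []\<close> \<open>lcp (last (a # xs)) (hd ys) = []\<close> by simp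
    then show ?thesis using Cons by simp
  qed
qed simp

lemma TT_app: "xs \<noteq> [] \<Longrightarrow> ys \<noteq> [] \<Longrightarrow> lcp (last xs) (hd ys) = []
   \<Longrightarrow> TT (xs @ ys) = TT xs + TT ys"
  unfolding TT_def using gg_app[of xs ys] by (cases xs) auto

lemma gg_cons: "gg (map (Cons x) bs) = gg bs"
  by (induction bs rule: gg.induct) auto

lemma TT_cons: "bs \<noteq> [] \<Longrightarrow> TT (map (Cons x) bs) = 1 + TT bs"
  unfolding TT_def gg_cons by (cases bs) auto

lemma TT_concat:
  assumes "\<forall>x\<in>set xs. f x \<noteq> [] \<and> (\<forall>b\<in>set (f x). b \<noteq> [] \<and> hd b = x)"
    and "distinct xs" and "tl0 \<noteq> []" and "\<forall>b\<in>set tl0. b \<noteq> [] \<and> hd b \<notin> set xs"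
  shows "TT (concat (map f xs) @ tl0) = sum_list (map (\<lambda>x. TT (f x)) xs) + TT tl0"
  using assms
proof (induction xs)
  case (Cons x xs)
  let ?R = "concat (map f xs) @ tl0"
  have p1: "\<forall>x\<in>set xs. f x \<noteq> [] \<and> (\<forall>b\<in>set (f x). b \<noteq> [] \<and> hd b = x)"
    using Cons.prems(1) by simp
  have p2: "distinct xs" using Cons.prems(2) by simp
  have p4: "\<forall>b\<in>set tl0. b \<noteq> [] \<and> hd b \<notin> set xs" using Cons.prems(4) by simp
  have R: "?R \<noteq> []" using Cons.prems(3) by simp
  have hR: "hd ?R \<in> set ?R" by (rule hd_in_set[OF R])
  have allR: "b \<noteq> [] \<and> hd b \<noteq> x" if bR: "b \<in> set ?R" for b
  proof -
    consider (a) y where "y \<in> set xs" "b \<in> set (f y)" | (b) "b \<in> set tl0"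
      using bR unfolding set_append set_concat set_map by blast
    then show ?thesis
    proof cases
      case a
      then have "b \<noteq> [] \<and> hd b = y" using p1 by blast
      moreover have "y \<noteq> x" using a(1) Cons.prems(2) by auto
      ultimately show ?thesis by simp
    next
      case b
      then show ?thesis using Cons.prems(4) by auto
    qed
  qed
  have h: "hd ?R \<noteq> []" "hd (hd ?R) \<noteq> x" using allR[OF hR] by auto
  have fx: "f x \<noteq> []" "\<forall>b\<in>set (f x). b \<noteq> [] \<and> hd b = x" using Cons.prems(1) by auto
  have lx: "last (f x) \<in> set (f x)" by (rule last_in_set[OF fx(1)])
  have fx2: "last (f x) \<noteq> []" "hd (last (f x)) = x" using fx(2) lx by auto
  have "lcp (last (f x)) (hd ?R) = []" using lcp_diff[OF fx2(1) h(1)] h(2) fx2(2) by simp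
  then have "TT (f x @ ?R) = TT (f x) + TT ?R" using TT_app fx(1) R by blast
  moreover have "TT ?R = sum_list (map (\<lambda>x. TT (f x)) xs) + TT tl0"
    by (rule Cons.IH[OF p1 p2 Cons.prems(3) p4])
  ultimately show ?case by simp
qed simp

lemma length_le_sum: "\<forall>x\<in>set xs. (x::nat) \<ge> 1 \<Longrightarrow> length xs \<le> sum_list xs"
  by (induction xs) auto

lemma finite_asc: "finite (asc_comps n m)"
proof -
  have "asc_comps n m \<subseteq> {xs. set xs \<subseteq> {..n} \<and> length xs \<le> n}"
    unfolding asc_comps_def using length_le_sum member_le_sum_list by fastforce
  then show ?thesis using finite_lists_length_le[of "{..n}" n] finite_subset by blast
qed

lemma set_asc_list: "set (asc_list n m) = asc_comps n m"
  unfolding asc_list_def using finite_asc by simp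

lemma sorted_hd_le: "sorted (a # xs) \<Longrightarrow> y \<in> set xs \<Longrightarrow> a \<le> y"
  by auto

lemma asc_decomp:
  assumes "1 \<le> m" "m \<le> n"
  shows "asc_comps n m = {[n]} \<union> (\<Union>x\<in>{m..n div 2}. Cons x ` asc_comps (n-x) x)"
proof
  show "asc_comps n m \<subseteq> {[n]} \<union> (\<Union>x\<in>{m..n div 2}. Cons x ` asc_comps (n-x) x)"
  proof
    fix xs assume xs: "xs \<in> asc_comps n m"
    then obtain a r where ar: "xs = a # r" unfolding asc_comps_def by (cases xs) auto
    show "xs \<in> {[n]} \<union> (\<Union>x\<in>{m..n div 2}. Cons x ` asc_comps (n-x) x)"
    proof (cases "r = []")
      case True then show ?thesis using xs ar unfolding asc_comps_def by auto
    next
      case False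
      have s: "sorted (a # r)" "a \<ge> m" "a + sum_list r = n" "\<forall>x\<in>set r. x \<ge> 1"
        using xs ar unfolding asc_comps_def by auto
      have "hd r \<in> set r" using False by simp
      then have hr: "hd r \<ge> a" using s(1) by auto
      have "hd r \<le> sum_list r" using \<open>hd r \<in> set r\<close> member_le_sum_list by blast
      then have "a \<le> n div 2" using hr s(3) by linarith
      moreover have "r \<in> asc_comps (n-a) a" unfolding asc_comps_def using False s hr by auto
      ultimately show ?thesis using ar s(2) by auto
    qed
  qed
next
  show "{[n]} \<union> (\<Union>x\<in>{m..n div 2}. Cons x ` asc_comps (n-x) x) \<subseteq> asc_comps n m"
  proof
    fix xs assume "xs \<in> {[n]} \<union> (\<Union>x\<in>{m..n div 2}. Cons x ` asc_comps (n-x) x)"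
    then consider "xs = [n]" | x r where "x \<in> {m..n div 2}" "r \<in> asc_comps (n-x) x" "xs = x # r"
      by blast
    then show "xs \<in> asc_comps n m"
    proof cases
      case 1 then show ?thesis using assms unfolding asc_comps_def by auto
    next
      case 2
      have r: "r \<noteq> []" "sorted r" "\<forall>y\<in>set r. y \<ge> 1" "sum_list r = n - x" "hd r \<ge> x"
        using 2(2) unfolding asc_comps_def by auto
      have "\<forall>y\<in>set r. x \<le> y"
      proof
        fix y assume "y \<in> set r"
        with r(1,2) have "hd r \<le> y" by (cases r) auto
        then show "x \<le> y" using r(5) by simp
      qed
      then show ?thesis using 2 r assms unfolding asc_comps_def by auto
    qed
  qed
qed

lemma sorted_wrt_concat_map:
  assumes "sorted_wrt (<) (xs::nat list)" "\<forall>x\<in>set xs. sorted_wrt P (f x)"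
    "\<forall>x\<in>set xs. \<forall>y\<in>set xs. x < y \<longrightarrow> (\<forall>a\<in>set (f x). \<forall>b\<in>set (f y). P a b)"
  shows "sorted_wrt P (concat (map f xs))"
  using assms
proof (induction xs)
  case (Cons x xs)
  then show ?case by (auto simp: sorted_wrt_append)
qed simp

lemma asc_list_decomp:
  assumes "1 \<le> m" "m \<le> n"
  shows "asc_list n m = concat (map (\<lambda>x. map (Cons x) (asc_list (n-x) x)) [m..<Suc (n div 2)]) @ [[n]]"
    (is "_ = ?L")
proof -
  have sl: "sorted_wrt (<) (asc_list k j)" for k j
    unfolding asc_list_def by simp
  have e: "set [m..<Suc (n div 2)] = {m..n div 2}" by auto
  have "set ?L = {[n]} \<union> (\<Union>x\<in>set [m..<Suc (n div 2)]. Cons x ` set (asc_list (n-x) x))"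
    by auto
  then have setL: "set ?L = asc_comps n m"
    unfolding e set_asc_list asc_decomp[OF assms] .
  have elem: "\<forall>b\<in>set (asc_list k x). hd (x # b) = x" for k x by simp
  have "sorted_wrt (<) (concat (map (\<lambda>x. map (Cons x) (asc_list (n-x) x)) [m..<Suc (n div 2)]))"
  proof (rule sorted_wrt_concat_map)
    show "sorted_wrt (<) [m..<Suc (n div 2)]" by (rule sorted_wrt_upt)
    show "\<forall>x\<in>set [m..<Suc (n div 2)]. sorted_wrt (<) (map (Cons x) (asc_list (n - x) x))"
      using sl by (simp add: sorted_wrt_map)
    show "\<forall>x\<in>set [m..<Suc (n div 2)]. \<forall>y\<in>set [m..<Suc (n div 2)]. x < y \<longrightarrow>
       (\<forall>a\<in>set (map (Cons x) (asc_list (n - x) x)). \<forall>b\<in>set (map (Cons y) (asc_list (n - y) y)). a < b)"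
      by auto
  qed
  moreover have "\<forall>a\<in>set (concat (map (\<lambda>x. map (Cons x) (asc_list (n-x) x)) [m..<Suc (n div 2)])). a < [n]"
  proof
    fix a assume "a \<in> set (concat (map (\<lambda>x. map (Cons x) (asc_list (n-x) x)) [m..<Suc (n div 2)]))"
    then obtain x r where ar: "a = x # r" "x \<le> n div 2"
      unfolding set_concat set_map by auto
    have "n div 2 < n" using assms by simp
    then have "x < n" using ar(2) by linarith
    then show "a < [n]" using ar(1) by simp
  qed
  ultimately have "sorted_wrt (<) ?L" by (simp add: sorted_wrt_append)
  moreover have "distinct ?L" using \<open>sorted_wrt (<) ?L\<close> strict_sorted_iff by blast
  then have "length ?L = card (asc_comps n m)"
    using setL distinct_card[of ?L] by simp
  ultimately have "sorted_wrt (<) ?L \<and> set ?L = asc_comps n m \<and> length ?L = card (asc_comps n m)"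
    using setL by blast
  from iffD1[OF sorted_list_of_set_unique[OF finite_asc] this] show ?thesis unfolding asc_list_def .
qed

lemma asc_list_ne: "1 \<le> m \<Longrightarrow> m \<le> n \<Longrightarrow> asc_list n m \<noteq> []"
  using asc_decomp[of m n] set_asc_list[of n m] by auto

theorem mainTheorem3:
  fixes n m :: nat
  assumes "1 \<le> m" and "m \<le> n"
  shows "suffix_len n m = 1 + (\<Sum>x = m..n div 2. suffix_len (n - x) x + 1)"
proof -
  let ?f = "\<lambda>x. map (Cons x) (asc_list (n-x) x)"
  let ?xs = "[m..<Suc (n div 2)]"
  have ne: "\<And>x. x \<in> set ?xs \<Longrightarrow> asc_list (n-x) x \<noteq> []"
    using assms by (intro asc_list_ne) auto
  have "TT (concat (map ?f ?xs) @ [[n]]) = sum_list (map (\<lambda>x. TT (?f x)) ?xs) + TT [[n]]"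
  proof (rule TT_concat)
    show "\<forall>x\<in>set ?xs. ?f x \<noteq> [] \<and> (\<forall>b\<in>set (?f x). b \<noteq> [] \<and> hd b = x)"
      using ne by auto
    show "\<forall>b\<in>set [[n]]. b \<noteq> [] \<and> hd b \<notin> set ?xs" using assms by auto
  qed auto
  also have "sum_list (map (\<lambda>x. TT (?f x)) ?xs) = sum_list (map (\<lambda>x. suffix_len (n-x) x + 1) ?xs)"
    using ne by (intro arg_cong[where f=sum_list] map_cong) (auto simp: TT_cons suffix_len_TT)
  also have "\<dots> = (\<Sum>x \<in> set ?xs. suffix_len (n - x) x + 1)"
    by (rule sum_set_upt_conv_sum_list_nat[symmetric])
  also have "set ?xs = {m..n div 2}" by auto
  finally have c: "TT (concat (map ?f ?xs) @ [[n]]) = (\<Sum>x = m..n div 2. suffix_len (n - x) x + 1) + TT [[n]]" .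
  have t1: "TT [[n]] = 1" by (simp add: TT_def)
  have "suffix_len n m = TT (concat (map ?f ?xs) @ [[n]])"
    unfolding suffix_len_TT asc_list_decomp[OF assms] ..
  then show ?thesis using c t1 by linarith
qed

end
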